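(* Let $q=r^2$ where $r$ is a prime power, and let $s\le l$ be positive integers. Let $C_1,C_2,\dots,C_s$ be linear codes of the same length $m$ over $\mathbb{F}_q$ and let $A\in M_{s,l}(\mathbb{F}_q)$. If $AA^\dagger$ is anti-diagonal (i.e., its only possibly nonzero entries are in positions $(i,s-i+1)$) and $C_i\subseteq C_{s-i+1}^{\perp_H}$ for all $1\le i\le s$, then the matrix-product code $C_A=[C_1,\dots,C_s]\cdot A$ satisfies $C_A\subseteq C_A^{\perp_H}$.
   Context: For $a\in\mathbb{F}_q$, $\overline{a}:=a^r$. For a matrix $A=[a_{ij}]$ over $\mathbb{F}_q$, $A^\dagger:=[\overline{a_{ji}}]$. The Hermitian inner product on $\mathbb{F}_q^n$ is $\langle u,v\rangle_H=\sum_{i} u_i\overline{v_i}$, and $C^{\perp_H}$ is the dual of $C$ with respect to it. $M_{s,l}(\mathbb{F}_q)$ is the set of $s\times l$ matrices over $\mathbb{F}_q$. If $C_i$ has generator matrix $G_i$ and $A=[a_{ij}]\in M_{s,l}(\mathbb{F}_q)$, the matrix-product code $[C_1,\dots,C_s]\cdot A$ is the linear code of length $ml$ generated by the block matrix whose $(i,j)$ block is $a_{ij}G_i$. *)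

theory Defs
  imports Main "HOL-Computational_Algebra.Primes" "HOL-Library.Cardinality"
begin

text \<open>Vectors of length n over a field are functions nat => 'a vanishing at indices >= n.
  Matrices are functions nat => nat => 'a, indices 0-based.\<close>

definition is_vec :: "nat \<Rightarrow> (nat \<Rightarrow> 'a::zero) \<Rightarrow> bool" where
  "is_vec n v \<longleftrightarrow> (\<forall>i\<ge>n. v i = 0)"

definition lin_code :: "nat \<Rightarrow> (nat \<Rightarrow> 'a::field) set \<Rightarrow> bool" where
  "lin_code n C \<longleftrightarrow> C \<subseteq> {v. is_vec n v} \<and> (\<lambda>_. 0) \<in> C \<and>
     (\<forall>u\<in>C. \<forall>v\<in>C. (\<lambda>i. u i + v i) \<in> C) \<and>
     (\<forall>c. \<forall>u\<in>C. (\<lambda>i. c * u i) \<in> C)"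

definition lin_span :: "(nat \<Rightarrow> 'a::field) set \<Rightarrow> (nat \<Rightarrow> 'a) set" where
  "lin_span S = {v. \<exists>F c. finite F \<and> F \<subseteq> S \<and> v = (\<lambda>k. \<Sum>g\<in>F. c g * g k)}"

text \<open>Conjugation a |-> a^r and the Hermitian inner product on F^n.\<close>
definition herm :: "nat \<Rightarrow> nat \<Rightarrow> (nat \<Rightarrow> 'a::field) \<Rightarrow> (nat \<Rightarrow> 'a) \<Rightarrow> 'a" where
  "herm r n u v = (\<Sum>i<n. u i * (v i) ^ r)"

definition herm_dual :: "nat \<Rightarrow> nat \<Rightarrow> (nat \<Rightarrow> 'a::field) set \<Rightarrow> (nat \<Rightarrow> 'a) set" where
  "herm_dual r n C = {v. is_vec n v \<and> (\<forall>u\<in>C. herm r n u v = 0)}"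

definition AAdag :: "nat \<Rightarrow> nat \<Rightarrow> (nat \<Rightarrow> nat \<Rightarrow> 'a::field) \<Rightarrow> nat \<Rightarrow> nat \<Rightarrow> 'a" where
  "AAdag r l A i k = (\<Sum>j<l. A i j * (A k j) ^ r)"

text \<open>Row of the block generator matrix of [C_1,...,C_s].A coming from the generator g of C_i:
  the j-th block (j < l) is a_{ij} g; length l*m.\<close>
definition block_row :: "nat \<Rightarrow> nat \<Rightarrow> (nat \<Rightarrow> nat \<Rightarrow> 'a::field) \<Rightarrow> nat \<Rightarrow> (nat \<Rightarrow> 'a) \<Rightarrow> nat \<Rightarrow> 'a" where
  "block_row m l A i g = (\<lambda>k. if k < l * m then A i (k div m) * g (k mod m) else 0)"

definition mp_code :: "nat \<Rightarrow> nat \<Rightarrow> nat \<Rightarrow> (nat \<Rightarrow> (nat \<Rightarrow> 'a::field) set) \<Rightarrow>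
    (nat \<Rightarrow> nat \<Rightarrow> 'a) \<Rightarrow> (nat \<Rightarrow> 'a) set" where
  "mp_code m s l C A = lin_span {block_row m l A i g | i g. i < s \<and> g \<in> C i}"

end

theory Submission
  imports Defs "HOL-Number_Theory.Residues"
begin

lemma char_is_p:
  fixes p k :: nat
  assumes "prime p" "k > 0" "CARD('a::{finite,field}) = p ^ k"
  shows "CHAR('a) = p"
proof -
  have "CHAR('a) > 0" by (simp add: finite_imp_CHAR_pos)
  hence pc: "prime CHAR('a)" using prime_CHAR_semidom by blast
  have "CHAR('a) dvd p ^ k" using CHAR_dvd_CARD[where 'a='a] assms(3) by simp
  hence "CHAR('a) dvd p" using pc prime_dvd_power by blast
  thus ?thesis using pc assms(1) by (simp add: primes_dvd_imp_eq)
qed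

lemma sum_div_mod:
  fixes f :: "nat \<Rightarrow> nat \<Rightarrow> 'b::comm_monoid_add"
  shows "(\<Sum>t<l*m. f (t div m) (t mod m)) = (\<Sum>j<l. \<Sum>t<m. f j t)"
proof -
  have bij: "bij_betw (\<lambda>(j,t). j*m+t) ({..<l} \<times> {..<m}) {..<l*m}"
  proof (rule bij_betwI[where g="\<lambda>t. (t div m, t mod m)"])
    show "(\<lambda>(j,t). j*m+t) \<in> {..<l} \<times> {..<m} \<rightarrow> {..<l*m}"
    proof
      fix x assume "x \<in> {..<l} \<times> {..<m}"
      then obtain j t where x: "x = (j,t)" "j < l" "t < m" by auto
      have "j*m+t < j*m+m" using x by simp
      also have "\<dots> = (j+1)*m" by simp
      also have "\<dots> \<le> l*m" using x by (intro mult_right_mono) auto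
      finally show "(case x of (j,t) \<Rightarrow> j*m+t) \<in> {..<l*m}" using x by simp
    qed
    show "(\<lambda>t. (t div m, t mod m)) \<in> {..<l*m} \<rightarrow> {..<l} \<times> {..<m}"
    proof
      fix t assume t: "t \<in> {..<l*m}"
      hence "m > 0" by (cases "m = 0") auto
      moreover have "t div m < l" using t \<open>m > 0\<close> by (simp add: div_less_iff_less_mult)
      ultimately show "(t div m, t mod m) \<in> {..<l} \<times> {..<m}" by simp
    qed
  qed auto
  have "(\<Sum>t<l*m. f (t div m) (t mod m)) = (\<Sum>x\<in>{..<l} \<times> {..<m}. f (fst x) (snd x))"
  proof -
    have "(\<Sum>t<l*m. f (t div m) (t mod m)) = (\<Sum>x\<in>{..<l} \<times> {..<m}. (\<lambda>t. f (t div m) (t mod m)) ((\<lambda>(j,t). j*m+t) x))"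
      by (rule sum.reindex_bij_betw[OF bij, symmetric])
    also have "\<dots> = (\<Sum>x\<in>{..<l} \<times> {..<m}. f (fst x) (snd x))"
      by (rule sum.cong) auto
    finally show ?thesis .
  qed
  also have "\<dots> = (\<Sum>j<l. \<Sum>t<m. f j t)" by (simp add: sum.cartesian_product case_prod_beta)
  finally show ?thesis .
qed

theorem theorem3p2:
  fixes r m s l :: nat
    and C :: "nat \<Rightarrow> (nat \<Rightarrow> 'a::{finite,field}) set"
    and A :: "nat \<Rightarrow> nat \<Rightarrow> 'a"
  assumes "\<exists>p k. prime p \<and> k > 0 \<and> r = p ^ k"
    and "CARD('a) = r ^ 2"
    and "0 < s" and "s \<le> l"
    and "\<forall>i<s. lin_code m (C i)"
    and "\<forall>i<s. \<forall>k<s. i + k \<noteq> s - 1 \<longrightarrow> AAdag r l A i k = 0"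
    and "\<forall>i<s. C i \<subseteq> herm_dual r m (C (s - 1 - i))"
  shows "mp_code m s l C A \<subseteq> herm_dual r (m * l) (mp_code m s l C A)"
proof -
  obtain p k where pk: "prime p" "k > 0" "r = p ^ k" using assms(1) by blast
  have "CARD('a) = p ^ (2*k)" using pk assms(2) by (simp add: power_mult[symmetric] mult.commute)
  hence "CHAR('a) = p" using char_is_p[where 'a='a, of p "2*k"] pk by simp
  hence rc: "prime CHAR('a)" "r = CHAR('a) ^ k" using pk by auto
  have fsum: "sum f S ^ r = (\<Sum>x\<in>S. f x ^ r)" for f :: "'b \<Rightarrow> 'a" and S
    using freshmans_dream_sum'[OF rc] .
  define R where "R = {block_row m l A i g | i g. i < s \<and> g \<in> C i}"
  have M: "mp_code m s l C A = lin_span R" unfolding mp_code_def R_def by simp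
  have rows: "herm r (m*l) g h = 0" if gR: "g \<in> R" and hR: "h \<in> R" for g h
  proof -
    obtain i a where g: "g = block_row m l A i a" "i < s" "a \<in> C i" using gR unfolding R_def by auto
    obtain j b where h: "h = block_row m l A j b" "j < s" "b \<in> C j" using hR unfolding R_def by auto
    have "herm r (m*l) g h = (\<Sum>t<l*m. (A i (t div m) * a (t mod m)) * (A j (t div m) * b (t mod m)) ^ r)"
      unfolding herm_def g h block_row_def by (simp add: mult.commute[of m l])
    also have "\<dots> = (\<Sum>u<l. \<Sum>t<m. (A i u * a t) * (A j u * b t) ^ r)"
      by (rule sum_div_mod)
    also have "\<dots> = (\<Sum>u<l. A i u * (A j u) ^ r * herm r m a b)"
      unfolding herm_def by (simp add: sum_distrib_left power_mult_distrib mult_ac)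
    also have "\<dots> = AAdag r l A i j * herm r m a b"
      unfolding AAdag_def by (simp add: sum_distrib_right)
    also have "\<dots> = 0"
    proof (cases "i + j = s - 1")
      case True
      hence "s - 1 - j = i" by simp
      hence "b \<in> herm_dual r m (C i)" using assms(7) h by force
      thus ?thesis using g(3) unfolding herm_dual_def by simp
    next
      case False thus ?thesis using assms(6) g h by simp
    qed
    finally show ?thesis .
  qed
  show ?thesis
  proof
    fix v assume "v \<in> mp_code m s l C A"
    then obtain G d where G: "finite G" "G \<subseteq> R" "v = (\<lambda>k. \<Sum>h\<in>G. d h * h k)"
      unfolding M lin_span_def by auto
    have vec: "is_vec (m*l) v"
      unfolding is_vec_def
    proof (intro allI impI)
      fix t assume t: "m*l \<le> t"
      have "h t = 0" if "h \<in> G" for h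
        using that G(2) t unfolding R_def block_row_def by (auto simp: mult.commute[of m l])
      thus "v t = 0" using G(3) by (simp add: sum.neutral)
    qed
    have orth: "herm r (m*l) u v = 0" if uM: "u \<in> mp_code m s l C A" for u
    proof -
      obtain F c where F: "finite F" "F \<subseteq> R" "u = (\<lambda>k. \<Sum>g\<in>F. c g * g k)"
        using uM unfolding M lin_span_def by auto
      have "herm r (m*l) u v = (\<Sum>t<m*l. (\<Sum>g\<in>F. c g * g t) * (\<Sum>h\<in>G. (d h) ^ r * (h t) ^ r))"
        unfolding herm_def F(3) G(3) by (simp add: fsum power_mult_distrib)
      also have "\<dots> = (\<Sum>g\<in>F. \<Sum>h\<in>G. c g * (d h) ^ r * herm r (m*l) g h)"
      proof -
        have "(\<Sum>t<m*l. (\<Sum>g\<in>F. c g * g t) * (\<Sum>h\<in>G. (d h) ^ r * (h t) ^ r))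
            = (\<Sum>t<m*l. \<Sum>g\<in>F. \<Sum>h\<in>G. c g * (d h) ^ r * (g t * (h t) ^ r))"
          by (intro sum.cong refl) (simp add: sum_distrib_left sum_distrib_right mult_ac sum.swap[of _ G])
        also have "\<dots> = (\<Sum>g\<in>F. \<Sum>t<m*l. \<Sum>h\<in>G. c g * (d h) ^ r * (g t * (h t) ^ r))"
          by (rule sum.swap)
        also have "\<dots> = (\<Sum>g\<in>F. \<Sum>h\<in>G. \<Sum>t<m*l. c g * (d h) ^ r * (g t * (h t) ^ r))"
          by (rule sum.cong[OF refl], rule sum.swap)
        also have "\<dots> = (\<Sum>g\<in>F. \<Sum>h\<in>G. c g * (d h) ^ r * herm r (m*l) g h)"
          unfolding herm_def by (simp add: sum_distrib_left)
        finally show ?thesis .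
      qed
      also have "\<dots> = 0" using rows F(2) G(2) by (intro sum.neutral ballI) (simp add: subset_iff)
      finally show ?thesis .
    qed
    show "v \<in> herm_dual r (m * l) (mp_code m s l C A)"
      unfolding herm_dual_def using vec orth by auto
  qed
qed

end
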